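(* Consider a finite Markov decision process with state set $\mathcal S$, action set $\mathcal A$, transition function $P$, reward function $R$, initial state distribution $d_0$ and discount factor $\gamma\in[0,1)$, together with a finite set of options $\mathcal O$ in which every option $o$ has an intra-option policy $\pi_o(s,a)$, a termination function $\beta_o(s,\vartheta)\in[0,1]$ differentiable in a parameter vector $\vartheta$, and a policy over options $\pi_{\mathcal O}(s,o)$. Let $X'=(O_0,S_1,O_1,S_2,O_2,S_3,\dots)$ be the random state-option transition path (state-option pairs shifted by one time step) generated by the option dynamics described in the context, and for $\mathcal T\in\mathbb N$ let $G^{\mathcal T}_\vartheta$ be the $\mathcal T$-step finite horizon Fisher information matrix with respect to $\vartheta$ of the distribution of this path truncated at time step $\mathcal T$, written in the form $$\big(G^{\mathcal T}_\vartheta\big)_{i,j}=-\mathbb E\Big[\frac{\partial^2\ln\Pr(X'_{0:\mathcal T};\vartheta)}{\partial\vartheta_i\partial\vartheta_j}\Big].$$ Let $\mu_{\mathcal O}(s',o)$ be the stationary distribution of state-option pairs $(s',o)$ (state $s'$ entered while option $o$ is active). Then $$\Big(\lim_{\mathcal T\to\infty}\frac1{\mathcal T}G^{\mathcal T}_\vartheta\Big)_{i,j}=-\sum_{s',o}\mu_{\mathcal O}(s',o)\,\frac{\partial\ln\beta_o(s',\vartheta)}{\partial\vartheta_i}\,\frac{\partial\ln\big(1-\beta_o(s',\vartheta)+\beta_o(s',\vartheta)\pi_{\mathcal O}(s',o)\big)}{\partial\vartheta_j}.$$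
   Context: Option dynamics (option-critic framework, all options available in every state): at time $t$ the agent is in state $S_t$ with active option $O_t$; it draws $A_t\sim\pi_{O_t}(S_t,\cdot)$, receives reward $R_t$ with $\mathbb E[R_t\mid S_t=s,A_t=a]=R(s,a)$, and moves to $S_{t+1}\sim P(S_t,A_t,\cdot)$. The next option is drawn with probability $\Pr(O_{t+1}=o'\mid O_t=o,S_{t+1}=s')=(1-\beta_o(s',\vartheta))\mathbf 1_{o'=o}+\beta_o(s',\vartheta)\pi_{\mathcal O}(s',o')$. The discounted problem is treated as an undiscounted one that terminates with probability $1-\gamma$ at each step. The process is assumed ergodic and irreducible so that the stationary distribution $\mu_{\mathcal O}$ is well defined, and all logarithms appearing are assumed finite (in particular $0<\beta_o(s',\vartheta)$ and $\beta_o(s',\vartheta)(1-\pi_{\mathcal O}(s',o))\neq 0$ where needed). *)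

theory Defs
  imports "HOL-Analysis.Analysis"
begin

definition partial :: "'n::finite \<Rightarrow> (real^'n \<Rightarrow> real) \<Rightarrow> real^'n \<Rightarrow> real" where
  "partial i f v = deriv (\<lambda>t. f (v + t *\<^sub>R axis i 1)) 0"

fun kpow :: "('x::finite \<Rightarrow> 'x \<Rightarrow> real) \<Rightarrow> nat \<Rightarrow> 'x \<Rightarrow> 'x \<Rightarrow> real" where
  "kpow K 0 x y = (if x = y then 1 else 0)"
| "kpow K (Suc n) x y = (\<Sum>z\<in>UNIV. kpow K n x z * K z y)"

definition stochastic_kernel :: "('x::finite \<Rightarrow> 'y::finite \<Rightarrow> real) \<Rightarrow> bool" where
  "stochastic_kernel K \<longleftrightarrow> (\<forall>x y. 0 \<le> K x y) \<and> (\<forall>x. (\<Sum>y\<in>UNIV. K x y) = 1)"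

definition prob_dist :: "('x::finite \<Rightarrow> real) \<Rightarrow> bool" where
  "prob_dist p \<longleftrightarrow> (\<forall>x. 0 \<le> p x) \<and> (\<Sum>x\<in>UNIV. p x) = 1"

definition irreducible_chain :: "('x::finite \<Rightarrow> 'x \<Rightarrow> real) \<Rightarrow> bool" where
  "irreducible_chain K \<longleftrightarrow> (\<forall>x y. \<exists>n>0. kpow K n x y > 0)"

definition aperiodic_chain :: "('x::finite \<Rightarrow> 'x \<Rightarrow> real) \<Rightarrow> bool" where
  "aperiodic_chain K \<longleftrightarrow> (\<forall>x. Gcd {n. n > 0 \<and> kpow K n x x > 0} = 1)"

definition stationary_dist :: "('x::finite \<Rightarrow> 'x \<Rightarrow> real) \<Rightarrow> ('x \<Rightarrow> real) \<Rightarrow> bool" where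
  "stationary_dist K mu \<longleftrightarrow> prob_dist mu \<and> (\<forall>y. (\<Sum>x\<in>UNIV. mu x * K x y) = mu y)"

(* Pr(O_{t+1} = \<omega>' | O_t = \<omega>, S_{t+1} = s') *)
definition opt_trans ::
  "('o \<Rightarrow> 's \<Rightarrow> real^'n \<Rightarrow> real) \<Rightarrow> ('s \<Rightarrow> 'o \<Rightarrow> real) \<Rightarrow> real^'n \<Rightarrow> 'o \<Rightarrow> 's \<Rightarrow> 'o \<Rightarrow> real" where
  "opt_trans \<beta> \<pi>O \<theta> \<omega> s \<omega>' =
     (1 - \<beta> \<omega> s \<theta>) * (if \<omega>' = \<omega> then 1 else 0) + \<beta> \<omega> s \<theta> * \<pi>O s \<omega>'"

(* transition kernel of the state-option pairs X'_t = (S_{t+1}, O_t) -> X'_{t+1} = (S_{t+2}, O_{t+1}) *)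
definition pair_kernel ::
  "('s::finite \<Rightarrow> 'a::finite \<Rightarrow> 's \<Rightarrow> real) \<Rightarrow> ('o::finite \<Rightarrow> 's \<Rightarrow> 'a \<Rightarrow> real) \<Rightarrow>
   ('o \<Rightarrow> 's \<Rightarrow> real^'n \<Rightarrow> real) \<Rightarrow> ('s \<Rightarrow> 'o \<Rightarrow> real) \<Rightarrow> real^'n \<Rightarrow>
   ('s \<times> 'o) \<Rightarrow> ('s \<times> 'o) \<Rightarrow> real" where
  "pair_kernel P \<pi> \<beta> \<pi>O \<theta> x y =
     (case x of (s, \<omega>) \<Rightarrow> case y of (s2, \<omega>2) \<Rightarrow>
        opt_trans \<beta> \<pi>O \<theta> \<omega> s \<omega>2 * (\<Sum>a\<in>UNIV. \<pi> \<omega>2 s a * P s a s2))"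

(* distribution of X'_0 = (S_1, O_0) *)
definition init_pair ::
  "('s::finite \<Rightarrow> real) \<Rightarrow> ('s \<Rightarrow> 'a::finite \<Rightarrow> 's \<Rightarrow> real) \<Rightarrow> ('o::finite \<Rightarrow> 's \<Rightarrow> 'a \<Rightarrow> real) \<Rightarrow>
   ('s \<Rightarrow> 'o \<Rightarrow> real) \<Rightarrow> ('s \<times> 'o) \<Rightarrow> real" where
  "init_pair d0 P \<pi> \<pi>O x =
     (case x of (s1, \<omega>0) \<Rightarrow>
        (\<Sum>s0\<in>UNIV. d0 s0 * \<pi>O s0 \<omega>0 * (\<Sum>a\<in>UNIV. \<pi> \<omega>0 s0 a * P s0 a s1)))"

(* truncated paths X'_{0:T} = (X'_0, ..., X'_T) *)
definition paths :: "nat \<Rightarrow> ('s \<times> 'o) list set" where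
  "paths T = {xs. length xs = Suc T}"

definition path_prob ::
  "('s::finite \<Rightarrow> real) \<Rightarrow> ('s \<Rightarrow> 'a::finite \<Rightarrow> 's \<Rightarrow> real) \<Rightarrow> ('o::finite \<Rightarrow> 's \<Rightarrow> 'a \<Rightarrow> real) \<Rightarrow>
   ('o \<Rightarrow> 's \<Rightarrow> real^'n \<Rightarrow> real) \<Rightarrow> ('s \<Rightarrow> 'o \<Rightarrow> real) \<Rightarrow> real^'n \<Rightarrow> ('s \<times> 'o) list \<Rightarrow> real" where
  "path_prob d0 P \<pi> \<beta> \<pi>O \<theta> xs =
     init_pair d0 P \<pi> \<pi>O (hd xs) *
     (\<Prod>t<length xs - 1. pair_kernel P \<pi> \<beta> \<pi>O \<theta> (xs ! t) (xs ! Suc t))"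

definition fisher_fh ::
  "('s::finite \<Rightarrow> real) \<Rightarrow> ('s \<Rightarrow> 'a::finite \<Rightarrow> 's \<Rightarrow> real) \<Rightarrow> ('o::finite \<Rightarrow> 's \<Rightarrow> 'a \<Rightarrow> real) \<Rightarrow>
   ('o \<Rightarrow> 's \<Rightarrow> real^'n::finite \<Rightarrow> real) \<Rightarrow> ('s \<Rightarrow> 'o \<Rightarrow> real) \<Rightarrow> nat \<Rightarrow> real^'n \<Rightarrow> 'n \<Rightarrow> 'n \<Rightarrow> real" where
  "fisher_fh d0 P \<pi> \<beta> \<pi>O T \<theta> i j =
     - (\<Sum>xs\<in>paths T. path_prob d0 P \<pi> \<beta> \<pi>O \<theta> xs *
          partial i (\<lambda>v. partial j (\<lambda>w. ln (path_prob d0 P \<pi> \<beta> \<pi>O w xs)) v) \<theta>)"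

end

theory Submission
  imports Defs
begin

lemma kpow_nonneg: "(\<forall>x y. 0 \<le> K x y) \<Longrightarrow> 0 \<le> kpow K n x y"
  by (induction n arbitrary: y) (auto intro!: sum_nonneg)

lemma kpow_stat:
  fixes K :: "'x::finite \<Rightarrow> 'x \<Rightarrow> real"
  assumes "\<forall>y. (\<Sum>x\<in>UNIV. v x * K x y) = v y"
  shows "(\<Sum>x\<in>UNIV. v x * kpow K n x y) = v y"
proof (induction n arbitrary: y)
  case 0
  have "(\<Sum>x\<in>UNIV. v x * kpow K 0 x y) = (\<Sum>x\<in>UNIV. if x = y then v y else 0)"
    by (intro sum.cong) auto
  then show ?case by simp
next
  case (Suc n)
  have "(\<Sum>x\<in>UNIV. v x * kpow K (Suc n) x y) = (\<Sum>x\<in>UNIV. \<Sum>z\<in>UNIV. v x * kpow K n x z * K z y)"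
    by (simp add: sum_distrib_left mult.assoc)
  also have "\<dots> = (\<Sum>z\<in>UNIV. \<Sum>x\<in>UNIV. v x * kpow K n x z * K z y)" by (rule sum.swap)
  also have "\<dots> = (\<Sum>z\<in>UNIV. v z * K z y)" by (simp add: sum_distrib_right[symmetric] Suc)
  also have "\<dots> = v y" using assms by simp
  finally show ?case .
qed

lemma stat_pos:
  fixes K :: "'x::finite \<Rightarrow> 'x \<Rightarrow> real"
  assumes nn: "\<forall>x y. 0 \<le> K x y" and irr: "irreducible_chain K" and st: "stationary_dist K mu"
  shows "0 < mu y"
proof -
  have pd: "\<forall>x. 0 \<le> mu x" "(\<Sum>x\<in>UNIV. mu x) = 1" and s: "\<forall>y. (\<Sum>x\<in>UNIV. mu x * K x y) = mu y"
    using st unfolding stationary_dist_def prob_dist_def by auto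
  obtain x where x: "mu x > 0"
  proof (rule ccontr)
    assume "\<not> thesis"
    then have "\<forall>x. mu x \<le> 0" using that by (meson not_less)
    then have "(\<Sum>x\<in>UNIV. mu x) \<le> 0" by (simp add: sum_nonpos)
    then show False using pd by simp
  qed
  obtain n where n: "kpow K n x y > 0" using irr unfolding irreducible_chain_def by blast
  have "mu x * kpow K n x y \<le> (\<Sum>z\<in>UNIV. mu z * kpow K n z y)"
    by (rule member_le_sum) (use pd(1) in \<open>auto intro!: mult_nonneg_nonneg kpow_nonneg nn\<close>)
  also have "\<dots> = mu y" by (rule kpow_stat[OF s])
  finally show ?thesis using x n by (smt (verit) mult_pos_pos)
qed

lemma stat_unique_signed:
  fixes K :: "'x::finite \<Rightarrow> 'x \<Rightarrow> real"
  assumes nn: "\<forall>x y. 0 \<le> K x y" and irr: "irreducible_chain K" and st: "stationary_dist K mu"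
    and sv: "\<forall>y. (\<Sum>x\<in>UNIV. v x * K x y) = v y" and s0: "(\<Sum>x\<in>UNIV. v x) = 0"
  shows "v x = 0"
proof -
  have pd: "(\<Sum>x\<in>UNIV. mu x) = 1" and s: "\<forall>y. (\<Sum>x\<in>UNIV. mu x * K x y) = mu y"
    using st unfolding stationary_dist_def prob_dist_def by auto
  have mpos: "\<And>y. 0 < mu y" using stat_pos[OF nn irr st] .
  define r where "r = (\<lambda>x. v x / mu x)"
  define m where "m = Min (range r)"
  obtain x0 where x0: "r x0 = m" unfolding m_def
  proof -
    have "m \<in> range r" unfolding m_def by (rule Min_in) auto
    then show ?thesis using that by blast
  qed
  have mle: "m \<le> r x" for x unfolding m_def by (simp)
  define l where "l = (\<lambda>x. v x - m * mu x)"
  have lnn: "0 \<le> l x" for x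
    using mle[of x] mpos[of x] unfolding l_def r_def by (simp add: field_simps)
  have l0: "l x0 = 0" using x0 mpos[of x0] unfolding l_def r_def by (simp add: field_simps)
  have ls: "\<forall>y. (\<Sum>x\<in>UNIV. l x * K x y) = l y"
  proof
    fix y
    have "(\<Sum>x\<in>UNIV. l x * K x y) = (\<Sum>x\<in>UNIV. v x * K x y) - m * (\<Sum>x\<in>UNIV. mu x * K x y)"
      by (simp add: l_def left_diff_distrib sum_subtractf sum_distrib_left mult.assoc)
    then show "(\<Sum>x\<in>UNIV. l x * K x y) = l y" using sv s by (simp add: l_def)
  qed
  have lz: "l x = 0" for x
  proof -
    obtain n where n: "kpow K n x x0 > 0" using irr unfolding irreducible_chain_def by blast
    have "l x * kpow K n x x0 \<le> (\<Sum>z\<in>UNIV. l z * kpow K n z x0)"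
      by (rule member_le_sum) (auto intro!: mult_nonneg_nonneg lnn kpow_nonneg nn)
    also have "\<dots> = 0" using kpow_stat[OF ls] l0 by simp
    finally have "l x * kpow K n x x0 \<le> 0" .
    then have "l x \<le> 0" using n by (simp add: mult_le_0_iff)
    then show ?thesis using lnn[of x] by simp
  qed
  have "(\<Sum>x\<in>UNIV. l x) = 0 - m" using s0 pd by (simp add: l_def sum_subtractf sum_distrib_left[symmetric])
  then have "m = 0" using lz by simp
  then show ?thesis using lz[of x] by (simp add: l_def)
qed
lemma cesaro:
  fixes K :: "'x::finite \<Rightarrow> 'x \<Rightarrow> real"
  assumes stoch: "stochastic_kernel K" and irr: "irreducible_chain K"
    and st: "stationary_dist K mu" and p0: "prob_dist p0"
  shows "(\<lambda>T. (\<Sum>t<T. (\<Sum>x\<in>UNIV. p0 x * kpow K t x y)) / real T) \<longlonglongrightarrow> mu y"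
proof -
  have nn: "\<forall>x y. 0 \<le> K x y" and rs: "\<And>x. (\<Sum>y\<in>UNIV. K x y) = 1"
    using stoch unfolding stochastic_kernel_def by auto
  have mus: "(\<Sum>x\<in>UNIV. mu x) = 1" and ms: "\<And>y. (\<Sum>x\<in>UNIV. mu x * K x y) = mu y"
    using st unfolding stationary_dist_def prob_dist_def by auto
  define d where "d t y = (\<Sum>x\<in>UNIV. p0 x * kpow K t x y)" for t y
  have dstep: "d (Suc t) y = (\<Sum>z\<in>UNIV. d t z * K z y)" for t y
  proof -
    have "d (Suc t) y = (\<Sum>x\<in>UNIV. \<Sum>z\<in>UNIV. p0 x * kpow K t x z * K z y)"
      by (simp add: d_def sum_distrib_left mult.assoc)
    also have "\<dots> = (\<Sum>z\<in>UNIV. \<Sum>x\<in>UNIV. p0 x * kpow K t x z * K z y)" by (rule sum.swap)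
    also have "\<dots> = (\<Sum>z\<in>UNIV. d t z * K z y)" by (simp add: d_def sum_distrib_right)
    finally show ?thesis .
  qed
  have dnn: "0 \<le> d t y" for t y
    using p0 unfolding d_def prob_dist_def by (auto intro!: sum_nonneg mult_nonneg_nonneg kpow_nonneg nn)
  have dsum: "(\<Sum>y\<in>UNIV. d t y) = 1" for t
  proof (induction t)
    case 0
    have "d 0 y = p0 y" for y
    proof -
      have "d 0 y = (\<Sum>x\<in>UNIV. if x = y then p0 y else 0)" unfolding d_def by (intro sum.cong) auto
      then show ?thesis by simp
    qed
    then show ?case using p0 by (simp add: prob_dist_def)
  next
    case (Suc t)
    have "(\<Sum>y\<in>UNIV. d (Suc t) y) = (\<Sum>y\<in>UNIV. \<Sum>z\<in>UNIV. d t z * K z y)" by (simp add: dstep)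
    also have "\<dots> = (\<Sum>z\<in>UNIV. d t z * (\<Sum>y\<in>UNIV. K z y))"
      by (subst sum.swap) (simp add: sum_distrib_left)
    also have "\<dots> = 1" using Suc by (simp add: rs)
    finally show ?case .
  qed
  have dle: "d t y \<le> 1" for t y
  proof -
    have "d t y \<le> (\<Sum>y\<in>UNIV. d t y)" by (rule member_le_sum) (auto simp: dnn)
    then show ?thesis using dsum by simp
  qed
  define f :: "real^'x \<Rightarrow> real^'x"
    where "f v = (\<chi> y. (\<Sum>x\<in>UNIV. v$x * K x y) - v$y + (\<Sum>x\<in>UNIV. v$x) * mu y)" for v
  have lin: "linear f"
    by (rule linearI) (simp_all add: f_def vec_eq_iff sum.distrib algebra_simps sum_distrib_left)
  have inj: "inj f"
    unfolding linear_injective_0[OF lin]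
  proof (intro allI impI)
    fix v assume "f v = 0"
    then have c: "(\<Sum>x\<in>UNIV. v$x * K x y) - v$y + (\<Sum>x\<in>UNIV. v$x) * mu y = 0" for y
      by (simp add: f_def vec_eq_iff)
    have "(\<Sum>y\<in>UNIV. (\<Sum>x\<in>UNIV. v$x * K x y) - v$y + (\<Sum>x\<in>UNIV. v$x) * mu y) = 0"
      using c by simp
    moreover have "(\<Sum>y\<in>UNIV. (\<Sum>x\<in>UNIV. v$x * K x y)) = (\<Sum>x\<in>UNIV. v$x)"
      by (subst sum.swap) (simp add: sum_distrib_left[symmetric] rs)
    moreover have "(\<Sum>y\<in>UNIV. (\<Sum>x\<in>UNIV. v$x * K x y) - v$y + (\<Sum>x\<in>UNIV. v$x) * mu y)
       = (\<Sum>y\<in>UNIV. (\<Sum>x\<in>UNIV. v$x * K x y)) - (\<Sum>y\<in>UNIV. v$y) + (\<Sum>x\<in>UNIV. v$x) * (\<Sum>y\<in>UNIV. mu y)"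
      by (simp only: sum.distrib sum_subtractf sum_distrib_left)
    ultimately have S: "(\<Sum>x\<in>UNIV. v$x) = 0"
      using mus by simp
    have sv: "\<forall>y. (\<Sum>x\<in>UNIV. v$x * K x y) = v$y"
    proof
      fix y show "(\<Sum>x\<in>UNIV. v$x * K x y) = v$y" using c[of y] unfolding S by linarith
    qed
    have "v$x = 0" for x by (rule stat_unique_signed[OF nn irr st sv S])
    then show "v = 0" by (simp add: vec_eq_iff)
  qed
  obtain B where B: "B > 0" "\<And>v. B * norm v \<le> norm (f v)"
    using linear_inj_bounded_below_pos[OF lin inj] by blast
  define a where "a T y = (\<Sum>t<T. d t y) / real T" for T y
  have asum: "(\<Sum>y\<in>UNIV. a T y) = 1" if "T > 0" for T
  proof -
    have "(\<Sum>y\<in>UNIV. a T y) = (\<Sum>y\<in>UNIV. \<Sum>t<T. d t y) / real T"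
      by (simp add: a_def sum_divide_distrib)
    also have "\<dots> = (\<Sum>t<T. \<Sum>y\<in>UNIV. d t y) / real T" by (subst sum.swap) simp
    also have "\<dots> = 1" using that by (simp add: dsum)
    finally show ?thesis .
  qed
  have bound: "\<bar>a T y - mu y\<bar> \<le> real CARD('x) / B * (1 / real T)" if "T > 0" for T
  proof -
    define w where "w = (\<chi> y. a T y - mu y)"
    have fw: "f w $ z = (d T z - d 0 z) / real T" for z
    proof -
      have "f w $ z = (\<Sum>x\<in>UNIV. (a T x - mu x) * K x z) - (a T z - mu z) + (\<Sum>x\<in>UNIV. a T x - mu x) * mu z"
        by (simp add: f_def w_def)
      also have "(\<Sum>x\<in>UNIV. a T x - mu x) = 0" using asum[OF that] mus by (simp add: sum_subtractf)
      also have "(\<Sum>x\<in>UNIV. (a T x - mu x) * K x z) = (\<Sum>x\<in>UNIV. a T x * K x z) - mu z"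
        by (simp add: left_diff_distrib sum_subtractf ms)
      also have "(\<Sum>x\<in>UNIV. a T x * K x z) = (\<Sum>x\<in>UNIV. \<Sum>t<T. d t x * K x z) / real T"
        by (simp add: a_def sum_divide_distrib sum_distrib_right)
      also have "\<dots> = (\<Sum>t<T. \<Sum>x\<in>UNIV. d t x * K x z) / real T" by (subst sum.swap) simp
      also have "\<dots> = (\<Sum>t<T. d (Suc t) z) / real T" by (simp add: dstep)
      finally have "f w $ z = ((\<Sum>t<T. d (Suc t) z) - (\<Sum>t<T. d t z)) / real T"
        by (simp add: a_def diff_divide_distrib)
      also have "(\<Sum>t<T. d (Suc t) z) - (\<Sum>t<T. d t z) = (\<Sum>t<T. d (Suc t) z - d t z)"
        by (simp add: sum_subtractf)
      also have "\<dots> = d T z - d 0 z" by (rule sum_lessThan_telescope)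
      finally show ?thesis .
    qed
    have "norm (f w) \<le> (\<Sum>z\<in>UNIV. \<bar>f w $ z\<bar>)" by (rule norm_le_l1_cart)
    also have "\<dots> \<le> (\<Sum>z\<in>(UNIV::'x set). 1 / real T)"
    proof (rule sum_mono)
      fix z :: 'x
      have "\<bar>d T z - d 0 z\<bar> \<le> 1" using dnn[of T z] dnn[of 0 z] dle[of T z] dle[of 0 z] by linarith
      then show "\<bar>f w $ z\<bar> \<le> 1 / real T" using that by (simp add: fw divide_right_mono)
    qed
    also have "\<dots> = real CARD('x) * (1 / real T)" by simp
    finally have "B * norm w \<le> real CARD('x) * (1 / real T)" using B(2)[of w] by linarith
    then have "norm w \<le> (real CARD('x) * (1 / real T)) / B" using B(1)
      by (simp add: pos_le_divide_eq mult.commute del: times_divide_eq_right)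
    then have "norm w \<le> real CARD('x) / B * (1 / real T)" by (simp add: mult.commute)
    moreover have "\<bar>w $ y\<bar> \<le> norm w" by (rule component_le_norm_cart)
    ultimately show ?thesis by (simp add: w_def)
  qed
  have "(\<lambda>T. a T y - mu y) \<longlonglongrightarrow> 0"
  proof (rule Lim_null_comparison)
    show "\<forall>\<^sub>F T in sequentially. norm (a T y - mu y) \<le> real CARD('x) / B * (1 / real T)"
      using eventually_gt_at_top[of "0::nat"] by eventually_elim (use bound in auto)
    show "(\<lambda>T. real CARD('x) / B * (1 / real T)) \<longlonglongrightarrow> 0"
      by (rule tendsto_mult_right_zero) (rule lim_inverse_n')
  qed
  then have "(\<lambda>T. a T y) \<longlonglongrightarrow> mu y" by (rule LIM_zero_cancel)
  then show ?thesis by (simp add: a_def d_def)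
qed
definition HD :: "'n::finite \<Rightarrow> (real^'n \<Rightarrow> real) \<Rightarrow> real^'n \<Rightarrow> real \<Rightarrow> bool" where
  "HD i f v d \<longleftrightarrow> ((\<lambda>t. f (v + t *\<^sub>R axis i 1)) has_real_derivative d) (at 0)"

lemma HD_partial: "HD i f v d \<Longrightarrow> partial i f v = d"
  unfolding HD_def partial_def by (rule DERIV_imp_deriv)

lemma HD_diff:
  assumes "f differentiable (at v)"
  shows "HD i f v (partial i f v)"
proof -
  obtain f' where f': "(f has_derivative f') (at v)" using assms unfolding differentiable_def by blast
  have l: "((\<lambda>t::real. v + t *\<^sub>R axis i 1) has_derivative (\<lambda>h. h *\<^sub>R axis i 1)) (at 0)"
    by (auto intro!: derivative_eq_intros)
  have f'': "(f has_derivative f') (at ((\<lambda>t::real. v + t *\<^sub>R axis i 1) 0))" using f' by simp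
  have "((f \<circ> (\<lambda>t::real. v + t *\<^sub>R axis i 1)) has_derivative (f' \<circ> (\<lambda>h. h *\<^sub>R axis i 1))) (at 0)"
    by (rule diff_chain_at[OF l f''])
  moreover have "(f' \<circ> (\<lambda>h. h *\<^sub>R axis i 1)) = (*) (f' (axis i 1))"
  proof
    fix h :: real
    have "linear f'" using f' by (simp add: has_derivative_linear)
    then have "f' (h *\<^sub>R axis i 1) = h *\<^sub>R f' (axis i 1)" by (simp add: linear_scale)
    then show "(f' \<circ> (\<lambda>h. h *\<^sub>R axis i 1)) h = f' (axis i 1) * h" by simp
  qed
  ultimately have "HD i f v (f' (axis i 1))" unfolding HD_def has_field_derivative_def comp_def by simp
  then show ?thesis using HD_partial by metis
qed

lemma HD_const: "HD i (\<lambda>w. c) v 0"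
  unfolding HD_def by simp

lemma HD_add: "HD i f v d1 \<Longrightarrow> HD i g v d2 \<Longrightarrow> HD i (\<lambda>w. f w + g w) v (d1 + d2)"
  unfolding HD_def by (rule DERIV_add)

lemma HD_cmult: "HD i f v d \<Longrightarrow> HD i (\<lambda>w. c * f w) v (c * d)"
  unfolding HD_def by (rule DERIV_cmult)

lemma HD_mult: assumes "HD i f v d1" "HD i g v d2" shows "HD i (\<lambda>w. f w * g w) v (d1 * g v + f v * d2)"
  using DERIV_mult[OF assms[unfolded HD_def]] unfolding HD_def by (simp add: mult.commute)

lemma HD_divide: assumes "HD i f v d1" "HD i g v d2" "g v \<noteq> 0"
  shows "HD i (\<lambda>w. f w / g w) v ((d1 * g v - f v * d2) / (g v * g v))"
proof -
  have "(\<lambda>t. g (v + t *\<^sub>R axis i 1)) 0 \<noteq> 0" using assms(3) by simp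
  from DERIV_divide[OF assms(1,2)[unfolded HD_def] this] show ?thesis unfolding HD_def by simp
qed

lemma HD_ln: assumes "HD i f v d" "0 < f v" shows "HD i (\<lambda>w. ln (f w)) v (d / f v)"
proof -
  have "(ln has_real_derivative 1 / f v) (at (f v))" using DERIV_ln_divide[OF assms(2)] .
  then have "(ln has_real_derivative 1 / f v) (at ((\<lambda>t. f (v + t *\<^sub>R axis i 1)) 0))" by simp
  from DERIV_chain2[OF this assms(1)[unfolded HD_def]] show ?thesis unfolding HD_def by simp
qed

lemma HD_sum: "finite A \<Longrightarrow> (\<And>a. a \<in> A \<Longrightarrow> HD i (f a) v (d a)) \<Longrightarrow> HD i (\<lambda>w. \<Sum>a\<in>A. f a w) v (\<Sum>a\<in>A. d a)"
  unfolding HD_def by (rule DERIV_sum)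
definition pw :: "('x \<Rightarrow> real) \<Rightarrow> ('x \<Rightarrow> 'x \<Rightarrow> real) \<Rightarrow> 'x list \<Rightarrow> real" where
  "pw p0 K xs = p0 (hd xs) * (\<Prod>t<length xs - 1. K (xs ! t) (xs ! Suc t))"

definition pG :: "('x \<Rightarrow> 'x \<Rightarrow> real) \<Rightarrow> 'x list \<Rightarrow> real" where
  "pG g xs = (\<Sum>t<length xs - 1. g (xs ! t) (xs ! Suc t))"

lemma paths_0: "paths 0 = (\<lambda>x. [x]) ` UNIV"
  unfolding paths_def by (auto simp: length_Suc_conv)

lemma paths_Suc: "paths (Suc T) = (\<lambda>(xs, y). xs @ [y]) ` (paths T \<times> UNIV)"
proof -
  have "xs \<in> (\<lambda>(xs, y). xs @ [y]) ` (paths T \<times> UNIV)" if "length xs = Suc (Suc T)" for xs :: "('a \<times> 'b) list"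
  proof -
    have "xs \<noteq> []" using that by auto
    then have "xs = butlast xs @ [last xs]" by simp
    moreover have "butlast xs \<in> paths T" using that by (simp add: paths_def)
    ultimately show ?thesis by (metis (mono_tags, lifting) SigmaI UNIV_I case_prod_conv image_eqI)
  qed
  then show ?thesis unfolding paths_def by auto
qed

lemma paths_finite: "finite (paths T :: ('s::finite \<times> 'o::finite) list set)"
  unfolding paths_def using finite_lists_length_eq[of "UNIV :: ('s \<times> 'o) set" "Suc T"] by simp

lemma sum_paths_0: "(\<Sum>xs\<in>paths 0. F xs) = (\<Sum>x\<in>(UNIV::('s::finite\<times>'o::finite) set). F [x])"
  unfolding paths_0 by (subst sum.reindex) (auto simp: inj_on_def)

lemma sum_paths_Suc:
  "(\<Sum>xs\<in>paths (Suc T). F xs) = (\<Sum>xs\<in>paths T. \<Sum>y\<in>(UNIV::('s::finite\<times>'o::finite) set). F (xs @ [y]))"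
proof -
  have inj: "inj_on (\<lambda>(xs, y). xs @ [y]) (paths T \<times> (UNIV::('s\<times>'o) set))"
    by (auto simp: inj_on_def)
  have "(\<Sum>xs\<in>paths (Suc T). F xs) = (\<Sum>p\<in>paths T \<times> (UNIV::('s\<times>'o) set). F ((\<lambda>(xs, y). xs @ [y]) p))"
    unfolding paths_Suc by (rule sum.reindex[OF inj, unfolded comp_def])
  also have "\<dots> = (\<Sum>xs\<in>paths T. \<Sum>y\<in>UNIV. F (xs @ [y]))"
    by (simp add: sum.cartesian_product split_def)
  finally show ?thesis .
qed

lemma paths_ne: "xs \<in> paths T \<Longrightarrow> xs \<noteq> []"
  by (auto simp: paths_def)

lemma pw_snoc: "xs \<noteq> [] \<Longrightarrow> pw p0 K (xs @ [y]) = pw p0 K xs * K (last xs) y"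
proof -
  assume ne: "xs \<noteq> []"
  then obtain n where n: "length xs = Suc n" by (cases xs) auto
  have "(\<Prod>t<length (xs @ [y]) - 1. K ((xs @ [y]) ! t) ((xs @ [y]) ! Suc t))
      = (\<Prod>t<Suc n. K ((xs @ [y]) ! t) ((xs @ [y]) ! Suc t))" using n by simp
  also have "\<dots> = (\<Prod>t<n. K ((xs @ [y]) ! t) ((xs @ [y]) ! Suc t)) * K ((xs @ [y]) ! n) ((xs @ [y]) ! Suc n)"
    by simp
  also have "(\<Prod>t<n. K ((xs @ [y]) ! t) ((xs @ [y]) ! Suc t)) = (\<Prod>t<n. K (xs ! t) (xs ! Suc t))"
    using n by (intro prod.cong) (auto simp: nth_append)
  also have "K ((xs @ [y]) ! n) ((xs @ [y]) ! Suc n) = K (last xs) y"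
    using n ne by (simp add: nth_append last_conv_nth)
  finally show ?thesis using ne n by (simp add: pw_def)
qed

lemma pG_snoc: "xs \<noteq> [] \<Longrightarrow> pG g (xs @ [y]) = pG g xs + g (last xs) y"
proof -
  assume ne: "xs \<noteq> []"
  then obtain n where n: "length xs = Suc n" by (cases xs) auto
  have "(\<Sum>t<length (xs @ [y]) - 1. g ((xs @ [y]) ! t) ((xs @ [y]) ! Suc t))
      = (\<Sum>t<Suc n. g ((xs @ [y]) ! t) ((xs @ [y]) ! Suc t))" using n by simp
  also have "\<dots> = (\<Sum>t<n. g ((xs @ [y]) ! t) ((xs @ [y]) ! Suc t)) + g ((xs @ [y]) ! n) ((xs @ [y]) ! Suc n)"
    by simp
  also have "(\<Sum>t<n. g ((xs @ [y]) ! t) ((xs @ [y]) ! Suc t)) = (\<Sum>t<n. g (xs ! t) (xs ! Suc t))"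
    using n by (intro sum.cong) (auto simp: nth_append)
  also have "g ((xs @ [y]) ! n) ((xs @ [y]) ! Suc n) = g (last xs) y"
    using n ne by (simp add: nth_append last_conv_nth)
  finally show ?thesis using ne n by (simp add: pG_def)
qed

lemma marg_last:
  fixes K :: "('s::finite \<times> 'o::finite) \<Rightarrow> ('s \<times> 'o) \<Rightarrow> real"
  shows "(\<Sum>xs\<in>paths T. pw p0 K xs * f (last xs)) = (\<Sum>y\<in>UNIV. (\<Sum>x\<in>UNIV. p0 x * kpow K T x y) * f y)"
proof (induction T arbitrary: f)
  case 0
  have "(\<Sum>y\<in>UNIV. (\<Sum>x\<in>UNIV. p0 x * kpow K 0 x y) * f y) = (\<Sum>y\<in>UNIV. p0 y * f y)"
  proof (rule sum.cong)
    fix y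
    have "(\<Sum>x\<in>UNIV. p0 x * kpow K 0 x y) = (\<Sum>x\<in>UNIV. if x = y then p0 y else 0)" by (intro sum.cong) auto
    then show "(\<Sum>x\<in>UNIV. p0 x * kpow K 0 x y) * f y = p0 y * f y" by simp
  qed simp
  then show ?case by (simp add: sum_paths_0 pw_def)
next
  case (Suc T)
  have "(\<Sum>xs\<in>paths (Suc T). pw p0 K xs * f (last xs)) = (\<Sum>xs\<in>paths T. \<Sum>y\<in>UNIV. pw p0 K xs * K (last xs) y * f y)"
    by (simp add: sum_paths_Suc pw_snoc paths_ne cong: sum.cong)
  also have "\<dots> = (\<Sum>xs\<in>paths T. pw p0 K xs * (\<lambda>z. \<Sum>y\<in>UNIV. K z y * f y) (last xs))"
    by (simp add: sum_distrib_left mult.assoc)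
  also have "\<dots> = (\<Sum>z\<in>UNIV. (\<Sum>x\<in>UNIV. p0 x * kpow K T x z) * (\<Sum>y\<in>UNIV. K z y * f y))"
    by (rule Suc.IH)
  also have "\<dots> = (\<Sum>z\<in>UNIV. \<Sum>y\<in>UNIV. \<Sum>x\<in>UNIV. p0 x * kpow K T x z * K z y * f y)"
    by (simp add: sum_distrib_left sum_distrib_right mult.assoc)
  also have "\<dots> = (\<Sum>y\<in>UNIV. \<Sum>x\<in>UNIV. \<Sum>z\<in>UNIV. p0 x * kpow K T x z * K z y * f y)"
    by (rule sum.swap[THEN trans], rule sum.cong[OF refl], rule sum.swap)
  also have "\<dots> = (\<Sum>y\<in>UNIV. (\<Sum>x\<in>UNIV. p0 x * kpow K (Suc T) x y) * f y)"
    by (simp add: sum_distrib_left sum_distrib_right mult.assoc)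
  finally show ?case .
qed

lemma marg_G:
  fixes K :: "('s::finite \<times> 'o::finite) \<Rightarrow> ('s \<times> 'o) \<Rightarrow> real"
  assumes rs: "\<And>x. (\<Sum>y\<in>UNIV. K x y) = 1"
  shows "(\<Sum>xs\<in>paths T. pw p0 K xs * pG g xs)
     = (\<Sum>t<T. \<Sum>x\<in>UNIV. (\<Sum>z\<in>UNIV. p0 z * kpow K t z x) * (\<Sum>y\<in>UNIV. K x y * g x y))"
proof (induction T)
  case 0
  then show ?case by (simp add: sum_paths_0 pG_def)
next
  case (Suc T)
  have "(\<Sum>xs\<in>paths (Suc T). pw p0 K xs * pG g xs)
      = (\<Sum>xs\<in>paths T. \<Sum>y\<in>UNIV. pw p0 K xs * K (last xs) y * (pG g xs + g (last xs) y))"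
    by (simp add: sum_paths_Suc pw_snoc pG_snoc paths_ne cong: sum.cong)
  also have "\<dots> = (\<Sum>xs\<in>paths T. pw p0 K xs * pG g xs * (\<Sum>y\<in>UNIV. K (last xs) y))
       + (\<Sum>xs\<in>paths T. pw p0 K xs * (\<lambda>z. \<Sum>y\<in>UNIV. K z y * g z y) (last xs))"
    by (simp add: sum_distrib_left sum.distrib algebra_simps)
  also have "\<dots> = (\<Sum>xs\<in>paths T. pw p0 K xs * pG g xs)
       + (\<Sum>x\<in>UNIV. (\<Sum>z\<in>UNIV. p0 z * kpow K T z x) * (\<Sum>y\<in>UNIV. K x y * g x y))"
    using marg_last[where f="\<lambda>z. \<Sum>y\<in>UNIV. K z y * g z y"]
    by (simp only: rs mult_1_right)
  finally show ?case using Suc.IH by simp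
qed
definition bb :: "('s \<Rightarrow> 'o \<Rightarrow> real) \<Rightarrow> 's \<times> 'o \<Rightarrow> 's \<times> 'o \<Rightarrow> real" where
  "bb \<pi>O x y = \<pi>O (fst x) (snd y) - (if snd y = snd x then 1 else 0)"

definition cc :: "('s \<Rightarrow> 'a::finite \<Rightarrow> 's \<Rightarrow> real) \<Rightarrow> ('o \<Rightarrow> 's \<Rightarrow> 'a \<Rightarrow> real) \<Rightarrow> 's \<times> 'o \<Rightarrow> 's \<times> 'o \<Rightarrow> real" where
  "cc P \<pi> x y = (\<Sum>a\<in>UNIV. \<pi> (snd y) (fst x) a * P (fst x) a (fst y))"

definition qq :: "('o \<Rightarrow> 's \<Rightarrow> real^'n \<Rightarrow> real) \<Rightarrow> ('s \<Rightarrow> 'o \<Rightarrow> real) \<Rightarrow> real^'n \<Rightarrow> 's \<times> 'o \<Rightarrow> 's \<times> 'o \<Rightarrow> real" where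
  "qq \<beta> \<pi>O w x y = opt_trans \<beta> \<pi>O w (snd x) (fst x) (snd y)"

lemma pk_eq: "pair_kernel P \<pi> \<beta> \<pi>O w x y = qq \<beta> \<pi>O w x y * cc P \<pi> x y"
  by (cases x; cases y) (simp add: pair_kernel_def qq_def cc_def)

lemma qq_eq: "qq \<beta> \<pi>O w x y = (if snd y = snd x then 1 else 0) + \<beta> (snd x) (fst x) w * bb \<pi>O x y"
  by (simp add: qq_def opt_trans_def bb_def algebra_simps)

lemma pw_eq: "path_prob d0 P \<pi> \<beta> \<pi>O w xs = pw (init_pair d0 P \<pi> \<pi>O) (pair_kernel P \<pi> \<beta> \<pi>O w) xs"
  by (simp add: path_prob_def pw_def)

definition gg :: "('o \<Rightarrow> 's \<Rightarrow> real^'n::finite \<Rightarrow> real) \<Rightarrow> ('s \<Rightarrow> 'o \<Rightarrow> real) \<Rightarrow> real^'n \<Rightarrow> 'n \<Rightarrow> 'n \<Rightarrow> 's \<times> 'o \<Rightarrow> 's \<times> 'o \<Rightarrow> real" where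
  "gg \<beta> \<pi>O \<theta> i j x y =
    (bb \<pi>O x y * partial i (partial j (\<beta> (snd x) (fst x))) \<theta> * qq \<beta> \<pi>O \<theta> x y
      - bb \<pi>O x y * partial j (\<beta> (snd x) (fst x)) \<theta> * (bb \<pi>O x y * partial i (\<beta> (snd x) (fst x)) \<theta>))
     / (qq \<beta> \<pi>O \<theta> x y * qq \<beta> \<pi>O \<theta> x y)"

context
  fixes P :: "'s::finite \<Rightarrow> 'a::finite \<Rightarrow> 's \<Rightarrow> real"
    and d0 :: "'s \<Rightarrow> real"
    and \<pi> :: "'o::finite \<Rightarrow> 's \<Rightarrow> 'a \<Rightarrow> real"
    and \<beta> :: "'o \<Rightarrow> 's \<Rightarrow> real^'n::finite \<Rightarrow> real"
    and \<pi>O :: "'s \<Rightarrow> 'o \<Rightarrow> real"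
    and \<theta> :: "real^'n"
    and i j :: 'n
  assumes P_stoch: "\<forall>s. stochastic_kernel (P s)"
    and d0_dist: "prob_dist d0"
    and \<pi>_stoch: "\<forall>\<omega>. stochastic_kernel (\<pi> \<omega>)"
    and \<pi>O_stoch: "stochastic_kernel \<pi>O"
    and \<beta>_range: "\<forall>\<omega> s v. 0 < \<beta> \<omega> s v \<and> \<beta> \<omega> s v \<le> 1"
    and log_finite: "\<forall>\<omega> s v. 0 < 1 - \<beta> \<omega> s v + \<beta> \<omega> s v * \<pi>O s \<omega>"
    and \<beta>_diff: "\<forall>\<omega> s v. \<beta> \<omega> s differentiable (at v)"
    and \<beta>_diff2: "\<forall>\<omega> s k v. partial k (\<beta> \<omega> s) differentiable (at v)"
begin

lemma P_nn: "0 \<le> P s a s'" and P_sum: "(\<Sum>s'\<in>UNIV. P s a s') = 1"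
  using P_stoch unfolding stochastic_kernel_def by auto

lemma pi_nn: "0 \<le> \<pi> \<omega> s a" and pi_sum: "(\<Sum>a\<in>UNIV. \<pi> \<omega> s a) = 1"
  using \<pi>_stoch unfolding stochastic_kernel_def by auto

lemma piO_nn: "0 \<le> \<pi>O s \<omega>" and piO_sum: "(\<Sum>\<omega>\<in>UNIV. \<pi>O s \<omega>) = 1"
  using \<pi>O_stoch unfolding stochastic_kernel_def by auto

lemma cc_nn: "0 \<le> cc P \<pi> x y"
  unfolding cc_def by (auto intro!: sum_nonneg mult_nonneg_nonneg P_nn pi_nn)

lemma qq_nn: "0 \<le> qq \<beta> \<pi>O w x y"
proof (cases "snd y = snd x")
  case True
  then show ?thesis using log_finite[rule_format, of "snd x" "fst x" w]
    by (simp add: qq_def opt_trans_def)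
next
  case False
  then show ?thesis using \<beta>_range[rule_format, of "snd x" "fst x" w] piO_nn[of "fst x" "snd y"]
    by (simp add: qq_def opt_trans_def)
qed

lemma qq_pos: assumes "qq \<beta> \<pi>O \<theta> x y \<noteq> 0" shows "0 < qq \<beta> \<pi>O w x y"
proof (cases "snd y = snd x")
  case True
  then show ?thesis using log_finite[rule_format, of "snd x" "fst x" w]
    by (simp add: qq_def opt_trans_def)
next
  case False
  then have "\<pi>O (fst x) (snd y) \<noteq> 0" using assms by (simp add: qq_def opt_trans_def)
  then have "0 < \<pi>O (fst x) (snd y)" using piO_nn[of "fst x" "snd y"] by simp
  then show ?thesis using False \<beta>_range[rule_format, of "snd x" "fst x" w]
    by (simp add: qq_def opt_trans_def)
qed

lemma init_nn: "0 \<le> init_pair d0 P \<pi> \<pi>O x"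
  using d0_dist unfolding prob_dist_def
  by (cases x) (auto simp: init_pair_def intro!: sum_nonneg mult_nonneg_nonneg P_nn pi_nn piO_nn)

lemma pk_nn: "0 \<le> pair_kernel P \<pi> \<beta> \<pi>O w x y"
  by (simp add: pk_eq cc_nn qq_nn)

lemma cc_sum: "(\<Sum>s2\<in>UNIV. cc P \<pi> x (s2, \<omega>2)) = 1"
proof -
  have "(\<Sum>s2\<in>UNIV. cc P \<pi> x (s2, \<omega>2)) = (\<Sum>a\<in>UNIV. \<pi> \<omega>2 (fst x) a * (\<Sum>s2\<in>UNIV. P (fst x) a s2))"
    unfolding cc_def by (subst sum.swap) (simp add: sum_distrib_left)
  then show ?thesis by (simp add: P_sum pi_sum)
qed

lemma qq_sum: "(\<Sum>\<omega>2\<in>UNIV. qq \<beta> \<pi>O w x (s2, \<omega>2)) = 1"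
proof -
  have "(\<Sum>\<omega>2\<in>UNIV. qq \<beta> \<pi>O w x (s2, \<omega>2))
     = (\<Sum>\<omega>2\<in>UNIV. (1 - \<beta> (snd x) (fst x) w) * (if \<omega>2 = snd x then 1 else 0)) + \<beta> (snd x) (fst x) w * (\<Sum>\<omega>2\<in>UNIV. \<pi>O (fst x) \<omega>2)"
    by (simp add: qq_def opt_trans_def sum.distrib sum_distrib_left)
  also have "(\<Sum>\<omega>2\<in>UNIV. (1 - \<beta> (snd x) (fst x) w) * (if \<omega>2 = snd x then 1 else 0))
     = (\<Sum>\<omega>2\<in>UNIV. if \<omega>2 = snd x then 1 - \<beta> (snd x) (fst x) w else 0)"
    by (intro sum.cong) auto
  finally show ?thesis by (simp add: piO_sum)
qed

lemma pk_rowsum: "(\<Sum>y\<in>UNIV. pair_kernel P \<pi> \<beta> \<pi>O w x y) = 1"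
proof -
  have "(\<Sum>y\<in>UNIV. pair_kernel P \<pi> \<beta> \<pi>O w x y) = (\<Sum>\<omega>2\<in>UNIV. \<Sum>s2\<in>UNIV. qq \<beta> \<pi>O w x (s2, \<omega>2) * cc P \<pi> x (s2, \<omega>2))"
    by (subst sum.swap) (simp add: sum.cartesian_product pk_eq)
  also have "\<dots> = (\<Sum>\<omega>2\<in>UNIV. qq \<beta> \<pi>O w x (s2, \<omega>2) * (\<Sum>s2\<in>UNIV. cc P \<pi> x (s2, \<omega>2)))"
    by (simp add: sum_distrib_left qq_def)
  also have "\<dots> = 1" by (simp add: cc_sum qq_sum)
  finally show ?thesis .
qed

lemma HD_qq: "HD k (\<lambda>w. qq \<beta> \<pi>O w x y) v (bb \<pi>O x y * partial k (\<beta> (snd x) (fst x)) v)"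
proof -
  have "HD k (\<lambda>w. (if snd y = snd x then 1 else 0) + bb \<pi>O x y * \<beta> (snd x) (fst x) w) v
      (0 + bb \<pi>O x y * partial k (\<beta> (snd x) (fst x)) v)"
    by (intro HD_add HD_const HD_cmult HD_diff) (use \<beta>_diff in blast)
  then show ?thesis by (simp add: qq_eq mult.commute)
qed

lemma path_hess:
  assumes xs: "xs \<in> paths T" and pos: "path_prob d0 P \<pi> \<beta> \<pi>O \<theta> xs \<noteq> 0"
  shows "partial i (\<lambda>v. partial j (\<lambda>w. ln (path_prob d0 P \<pi> \<beta> \<pi>O w xs)) v) \<theta> = pG (gg \<beta> \<pi>O \<theta> i j) xs"
proof -
  have len: "length xs - 1 = T" using xs by (simp add: paths_def)
  define I where "I = init_pair d0 P \<pi> \<pi>O (hd xs)"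
  define Q where "Q w t = qq \<beta> \<pi>O w (xs ! t) (xs ! Suc t)" for w t
  define C where "C t = cc P \<pi> (xs ! t) (xs ! Suc t)" for t
  define B where "B t = bb \<pi>O (xs ! t) (xs ! Suc t)" for t
  define be where "be t = \<beta> (snd (xs ! t)) (fst (xs ! t))" for t
  have pp: "path_prob d0 P \<pi> \<beta> \<pi>O w xs = I * (\<Prod>t<T. Q w t * C t)" for w
    using len by (simp add: path_prob_def pk_eq I_def Q_def C_def)
  have I0: "I \<noteq> 0" and P0: "\<And>t. t < T \<Longrightarrow> Q \<theta> t \<noteq> 0 \<and> C t \<noteq> 0"
    using pos unfolding pp by auto
  have Ipos: "0 < I" using I0 init_nn[of "hd xs"] unfolding I_def by simp
  have Cpos: "0 < C t" if "t < T" for t using P0[OF that] cc_nn unfolding C_def by (simp add: order_less_le)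
  have Qpos: "0 < Q w t" if "t < T" for w t using P0[OF that] qq_pos unfolding Q_def by blast
  have lnpp: "ln (path_prob d0 P \<pi> \<beta> \<pi>O w xs) = ln I + (\<Sum>t<T. ln (C t) + ln (Q w t))" for w
  proof -
    have "0 < (\<Prod>t<T. Q w t * C t)" by (rule prod_pos) (simp add: Qpos Cpos)
    then have "ln (path_prob d0 P \<pi> \<beta> \<pi>O w xs) = ln I + ln (\<Prod>t<T. Q w t * C t)"
      unfolding pp using Ipos by (rule ln_mult_pos[rotated])
    also have "ln (\<Prod>t<T. Q w t * C t) = (\<Sum>t<T. ln (Q w t * C t))"
    proof (rule ln_prod)
      fix t assume "t \<in> {..<T}"
      then have "0 < Q w t * C t" using Qpos Cpos by simp
      then show "Q w t * C t \<noteq> 0" by linarith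
    qed simp
    also have "\<dots> = (\<Sum>t<T. ln (C t) + ln (Q w t))"
      by (rule sum.cong) (use Qpos Cpos in \<open>auto simp: ln_mult_pos\<close>)
    finally show ?thesis .
  qed
  have d1: "partial j (\<lambda>w. ln (path_prob d0 P \<pi> \<beta> \<pi>O w xs)) v = (\<Sum>t<T. B t * partial j (be t) v / Q v t)" for v
  proof -
    have "HD j (\<lambda>w. ln I + (\<Sum>t<T. ln (C t) + ln (Q w t))) v (0 + (\<Sum>t<T. 0 + B t * partial j (be t) v / Q v t))"
    proof (intro HD_add HD_const HD_sum)
      fix t assume "t \<in> {..<T}"
      then show "HD j (\<lambda>w. ln (Q w t)) v (B t * partial j (be t) v / Q v t)"
        using HD_ln[OF HD_qq Qpos[unfolded Q_def]] \<open>t \<in> {..<T}\<close> unfolding Q_def B_def be_def by simp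
    qed simp
    then show ?thesis unfolding lnpp by (simp add: HD_partial)
  qed
  have "HD i (\<lambda>v. \<Sum>t<T. B t * partial j (be t) v / Q v t) \<theta>
     (\<Sum>t<T. ((B t * partial i (partial j (be t)) \<theta>) * Q \<theta> t - B t * partial j (be t) \<theta> * (B t * partial i (be t) \<theta>)) / (Q \<theta> t * Q \<theta> t))"
  proof (intro HD_sum)
    fix t assume t: "t \<in> {..<T}"
    show "HD i (\<lambda>v. B t * partial j (be t) v / Q v t) \<theta>
     (((B t * partial i (partial j (be t)) \<theta>) * Q \<theta> t - B t * partial j (be t) \<theta> * (B t * partial i (be t) \<theta>)) / (Q \<theta> t * Q \<theta> t))"
    proof (rule HD_divide)
      show "HD i (\<lambda>v. B t * partial j (be t) v) \<theta> (B t * partial i (partial j (be t)) \<theta>)"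
        by (intro HD_cmult HD_diff) (use \<beta>_diff2 in \<open>simp add: be_def\<close>)
      show "HD i (\<lambda>v. Q v t) \<theta> (B t * partial i (be t) \<theta>)"
        unfolding Q_def B_def be_def by (rule HD_qq)
      show "Q \<theta> t \<noteq> 0" using Qpos[of t \<theta>] t by simp
    qed
  qed simp
  then have "partial i (\<lambda>v. \<Sum>t<T. B t * partial j (be t) v / Q v t) \<theta> = pG (gg \<beta> \<pi>O \<theta> i j) xs"
    using len by (simp add: HD_partial pG_def gg_def B_def be_def Q_def)
  moreover have "(\<lambda>v. partial j (\<lambda>w. ln (path_prob d0 P \<pi> \<beta> \<pi>O w xs)) v) = (\<lambda>v. \<Sum>t<T. B t * partial j (be t) v / Q v t)"
    using d1 by (rule ext)
  ultimately show ?thesis by simp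
qed

end
context
  fixes P :: "'s::finite \<Rightarrow> 'a::finite \<Rightarrow> 's \<Rightarrow> real"
    and d0 :: "'s \<Rightarrow> real"
    and \<pi> :: "'o::finite \<Rightarrow> 's \<Rightarrow> 'a \<Rightarrow> real"
    and \<beta> :: "'o \<Rightarrow> 's \<Rightarrow> real^'n::finite \<Rightarrow> real"
    and \<pi>O :: "'s \<Rightarrow> 'o \<Rightarrow> real"
    and \<theta> :: "real^'n"
    and i j :: 'n
  assumes P_stoch: "\<forall>s. stochastic_kernel (P s)"
    and d0_dist: "prob_dist d0"
    and \<pi>_stoch: "\<forall>\<omega>. stochastic_kernel (\<pi> \<omega>)"
    and \<pi>O_stoch: "stochastic_kernel \<pi>O"
    and \<beta>_range: "\<forall>\<omega> s v. 0 < \<beta> \<omega> s v \<and> \<beta> \<omega> s v \<le> 1"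
    and log_finite: "\<forall>\<omega> s v. 0 < 1 - \<beta> \<omega> s v + \<beta> \<omega> s v * \<pi>O s \<omega>"
    and \<beta>_diff: "\<forall>\<omega> s v. \<beta> \<omega> s differentiable (at v)"
    and \<beta>_diff2: "\<forall>\<omega> s k v. partial k (\<beta> \<omega> s) differentiable (at v)"
begin

lemma init_sum: "(\<Sum>x\<in>UNIV. init_pair d0 P \<pi> \<pi>O x) = 1"
proof -
  have "(\<Sum>x\<in>UNIV. init_pair d0 P \<pi> \<pi>O x)
      = (\<Sum>s1\<in>UNIV. \<Sum>\<omega>0\<in>UNIV. \<Sum>s0\<in>UNIV. d0 s0 * \<pi>O s0 \<omega>0 * (\<Sum>a\<in>UNIV. \<pi> \<omega>0 s0 a * P s0 a s1))"
  proof -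
    have e: "(\<Sum>x\<in>UNIV. F x) = (\<Sum>s1\<in>UNIV. \<Sum>\<omega>0\<in>UNIV. F (s1, \<omega>0))" for F :: "'s \<times> 'o \<Rightarrow> real"
      by (simp add: sum.cartesian_product)
    show ?thesis by (subst e) (simp add: init_pair_def)
  qed
  also have "\<dots> = (\<Sum>\<omega>0\<in>UNIV. \<Sum>s1\<in>UNIV. \<Sum>s0\<in>UNIV. d0 s0 * \<pi>O s0 \<omega>0 * (\<Sum>a\<in>UNIV. \<pi> \<omega>0 s0 a * P s0 a s1))"
    by (rule sum.swap)
  also have "\<dots> = (\<Sum>\<omega>0\<in>UNIV. \<Sum>s0\<in>UNIV. \<Sum>s1\<in>UNIV. d0 s0 * \<pi>O s0 \<omega>0 * (\<Sum>a\<in>UNIV. \<pi> \<omega>0 s0 a * P s0 a s1))"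
    by (rule sum.cong[OF refl], rule sum.swap)
  also have "\<dots> = (\<Sum>\<omega>0\<in>UNIV. \<Sum>s0\<in>UNIV. d0 s0 * \<pi>O s0 \<omega>0 * (\<Sum>s1\<in>UNIV. \<Sum>a\<in>UNIV. \<pi> \<omega>0 s0 a * P s0 a s1))"
    by (simp only: sum_distrib_left)
  also have "\<dots> = (\<Sum>\<omega>0\<in>UNIV. \<Sum>s0\<in>UNIV. d0 s0 * \<pi>O s0 \<omega>0)"
  proof -
    have "(\<Sum>s1\<in>UNIV. \<Sum>a\<in>UNIV. \<pi> \<omega>0 s0 a * P s0 a s1) = 1" for \<omega>0 s0
    proof -
      have "(\<Sum>s1\<in>UNIV. \<Sum>a\<in>UNIV. \<pi> \<omega>0 s0 a * P s0 a s1) = (\<Sum>a\<in>UNIV. \<pi> \<omega>0 s0 a * (\<Sum>s1\<in>UNIV. P s0 a s1))"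
        by (subst sum.swap) (simp only: sum_distrib_left)
      then show ?thesis using P_stoch \<pi>_stoch by (simp add: stochastic_kernel_def)
    qed
    then show ?thesis by simp
  qed
  also have "\<dots> = (\<Sum>s0\<in>UNIV. \<Sum>\<omega>0\<in>UNIV. d0 s0 * \<pi>O s0 \<omega>0)" by (rule sum.swap)
  also have "\<dots> = (\<Sum>s0\<in>UNIV. d0 s0 * (\<Sum>\<omega>0\<in>UNIV. \<pi>O s0 \<omega>0))"
    by (simp only: sum_distrib_left)
  also have "\<dots> = 1"
    using \<pi>O_stoch d0_dist by (simp add: stochastic_kernel_def prob_dist_def)
  finally show ?thesis .
qed

definition Phi :: "'s \<times> 'o \<Rightarrow> real" where
  "Phi x = (1 - \<pi>O (fst x) (snd x)) * partial i (\<beta> (snd x) (fst x)) \<theta> * partial j (\<beta> (snd x) (fst x)) \<theta>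
     / (\<beta> (snd x) (fst x) \<theta> * (1 - \<beta> (snd x) (fst x) \<theta> + \<beta> (snd x) (fst x) \<theta> * \<pi>O (fst x) (snd x)))"

lemma step_expect: "(\<Sum>y\<in>UNIV. pair_kernel P \<pi> \<beta> \<pi>O \<theta> x y * gg \<beta> \<pi>O \<theta> i j x y) = - Phi x"
proof -
  obtain s \<omega> where x: "x = (s, \<omega>)" by (cases x)
  define b where "b = \<beta> \<omega> s \<theta>"
  define p where "p = \<pi>O s"
  define c where "c = 1 - b + b * p \<omega>"
  define X where "X = partial i (partial j (\<beta> \<omega> s)) \<theta>"
  define Y where "Y = partial j (\<beta> \<omega> s) \<theta> * partial i (\<beta> \<omega> s) \<theta>"
  define B where "B \<omega>2 = p \<omega>2 - (if \<omega>2 = \<omega> then 1 else 0)" for \<omega>2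
  define Q where "Q \<omega>2 = (if \<omega>2 = \<omega> then 1 else 0) + b * B \<omega>2" for \<omega>2
  have bpos: "0 < b" using \<beta>_range b_def by auto
  have cpos: "0 < c" using log_finite c_def b_def p_def by auto
  have pnn: "0 \<le> p \<omega>2" for \<omega>2 using piO_nn[OF P_stoch d0_dist \<pi>_stoch \<pi>O_stoch \<beta>_range log_finite \<beta>_diff \<beta>_diff2] p_def by simp
  have psum: "(\<Sum>\<omega>2\<in>UNIV. p \<omega>2) = 1" using piO_sum[OF P_stoch d0_dist \<pi>_stoch \<pi>O_stoch \<beta>_range log_finite \<beta>_diff \<beta>_diff2] p_def by simp
  have qqe: "qq \<beta> \<pi>O \<theta> x (s2, \<omega>2) = Q \<omega>2" for s2 \<omega>2
    by (simp add: qq_eq x Q_def B_def b_def p_def bb_def)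
  have gge: "gg \<beta> \<pi>O \<theta> i j x (s2, \<omega>2) = (B \<omega>2 * X * Q \<omega>2 - B \<omega>2 * B \<omega>2 * Y) / (Q \<omega>2 * Q \<omega>2)" for s2 \<omega>2
    unfolding gg_def qqe by (simp add: x B_def p_def bb_def X_def Y_def algebra_simps)
  have "(\<Sum>y\<in>UNIV. pair_kernel P \<pi> \<beta> \<pi>O \<theta> x y * gg \<beta> \<pi>O \<theta> i j x y)
     = (\<Sum>\<omega>2\<in>UNIV. \<Sum>s2\<in>UNIV. Q \<omega>2 * cc P \<pi> x (s2, \<omega>2) * ((B \<omega>2 * X * Q \<omega>2 - B \<omega>2 * B \<omega>2 * Y) / (Q \<omega>2 * Q \<omega>2)))"
  proof -
    have e: "(\<Sum>y\<in>UNIV. F y) = (\<Sum>s2\<in>UNIV. \<Sum>\<omega>2\<in>UNIV. F (s2, \<omega>2))" for F :: "'s \<times> 'o \<Rightarrow> real"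
      by (simp add: sum.cartesian_product)
    show ?thesis by (subst e, subst sum.swap) (simp only: pk_eq qqe gge)
  qed
  also have "\<dots> = (\<Sum>\<omega>2\<in>UNIV. Q \<omega>2 * ((B \<omega>2 * X * Q \<omega>2 - B \<omega>2 * B \<omega>2 * Y) / (Q \<omega>2 * Q \<omega>2)) * (\<Sum>s2\<in>UNIV. cc P \<pi> x (s2, \<omega>2)))"
    by (rule sum.cong[OF refl], subst sum_distrib_left, rule sum.cong[OF refl], simp only: mult_ac)
  also have "\<dots> = (\<Sum>\<omega>2\<in>UNIV. B \<omega>2 * X - Y * (B \<omega>2 * B \<omega>2 / Q \<omega>2))"
  proof (rule sum.cong[OF refl])
    fix \<omega>2
    have cs: "(\<Sum>s2\<in>UNIV. cc P \<pi> x (s2, \<omega>2)) = 1"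
      by (rule cc_sum[OF P_stoch d0_dist \<pi>_stoch \<pi>O_stoch \<beta>_range log_finite \<beta>_diff \<beta>_diff2])
    show "Q \<omega>2 * ((B \<omega>2 * X * Q \<omega>2 - B \<omega>2 * B \<omega>2 * Y) / (Q \<omega>2 * Q \<omega>2)) * (\<Sum>s2\<in>UNIV. cc P \<pi> x (s2, \<omega>2))
        = B \<omega>2 * X - Y * (B \<omega>2 * B \<omega>2 / Q \<omega>2)"
    proof (cases "Q \<omega>2 = 0")
      case True
      then have "\<omega>2 \<noteq> \<omega>" using cpos unfolding Q_def B_def c_def by (auto simp: algebra_simps)
      then have "B \<omega>2 = 0" using True bpos unfolding Q_def B_def by auto
      then show ?thesis using True by simp
    next
      case False
      then show ?thesis using cs by (simp add: field_simps)
    qed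
  qed
  also have "\<dots> = X * (\<Sum>\<omega>2\<in>UNIV. B \<omega>2) - Y * (\<Sum>\<omega>2\<in>UNIV. B \<omega>2 * B \<omega>2 / Q \<omega>2)"
    by (simp add: sum_subtractf sum_distrib_left mult.commute)
  also have "(\<Sum>\<omega>2\<in>UNIV. B \<omega>2) = 0"
    by (simp add: B_def sum_subtractf psum)
  also have "(\<Sum>\<omega>2\<in>UNIV. B \<omega>2 * B \<omega>2 / Q \<omega>2) = (1 - p \<omega>) * (1 - p \<omega>) / c + (1 - p \<omega>) / b"
  proof -
    have "(\<Sum>\<omega>2\<in>UNIV. B \<omega>2 * B \<omega>2 / Q \<omega>2) = B \<omega> * B \<omega> / Q \<omega> + (\<Sum>\<omega>2\<in>UNIV - {\<omega>}. B \<omega>2 * B \<omega>2 / Q \<omega>2)"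
      by (simp add: sum.remove)
    also have "B \<omega> * B \<omega> / Q \<omega> = (1 - p \<omega>) * (1 - p \<omega>) / c"
      by (simp add: B_def Q_def c_def algebra_simps)
    also have "(\<Sum>\<omega>2\<in>UNIV - {\<omega>}. B \<omega>2 * B \<omega>2 / Q \<omega>2) = (\<Sum>\<omega>2\<in>UNIV - {\<omega>}. p \<omega>2 / b)"
    proof (rule sum.cong[OF refl])
      fix \<omega>2 assume "\<omega>2 \<in> UNIV - {\<omega>}"
      then have "\<omega>2 \<noteq> \<omega>" by simp
      then show "B \<omega>2 * B \<omega>2 / Q \<omega>2 = p \<omega>2 / b"
        using bpos by (cases "p \<omega>2 = 0") (simp_all add: B_def Q_def field_simps)
    qed
    also have "\<dots> = (\<Sum>\<omega>2\<in>UNIV - {\<omega>}. p \<omega>2) / b" by (simp add: sum_divide_distrib)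
    also have "(\<Sum>\<omega>2\<in>UNIV - {\<omega>}. p \<omega>2) = 1 - p \<omega>"
      using psum by (simp add: sum.remove[of UNIV \<omega> p] algebra_simps) 
    finally show ?thesis .
  qed
  also have "X * 0 - Y * ((1 - p \<omega>) * (1 - p \<omega>) / c + (1 - p \<omega>) / b) = - ((1 - p \<omega>) * Y / (b * c))"
  proof -
    have "(1 - p \<omega>) * (1 - p \<omega>) / c + (1 - p \<omega>) / b = (1 - p \<omega>) * ((1 - p \<omega>) * b + c) / (b * c)"
      using bpos cpos by (simp add: field_simps)
    also have "(1 - p \<omega>) * b + c = 1" by (simp add: c_def algebra_simps)
    finally show ?thesis by simp
  qed
  also have "\<dots> = - Phi x"
    by (simp add: Phi_def x b_def p_def c_def Y_def algebra_simps)
  finally show ?thesis .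
qed


lemma partial_ln_beta: "partial i (\<lambda>v. ln (\<beta> \<omega> s v)) \<theta> = partial i (\<beta> \<omega> s) \<theta> / \<beta> \<omega> s \<theta>"
proof -
  have "HD i (\<lambda>v. ln (\<beta> \<omega> s v)) \<theta> (partial i (\<beta> \<omega> s) \<theta> / \<beta> \<omega> s \<theta>)"
    by (rule HD_ln[OF HD_diff]) (use \<beta>_diff \<beta>_range in auto)
  then show ?thesis by (rule HD_partial)
qed

lemma partial_ln_c: "partial j (\<lambda>v. ln (1 - \<beta> \<omega> s v + \<beta> \<omega> s v * \<pi>O s \<omega>)) \<theta>
   = (\<pi>O s \<omega> - 1) * partial j (\<beta> \<omega> s) \<theta> / (1 - \<beta> \<omega> s \<theta> + \<beta> \<omega> s \<theta> * \<pi>O s \<omega>)"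
proof -
  have e: "(\<lambda>v. 1 - \<beta> \<omega> s v + \<beta> \<omega> s v * \<pi>O s \<omega>) = (\<lambda>v. 1 + (\<pi>O s \<omega> - 1) * \<beta> \<omega> s v)"
    by (rule ext) (simp add: algebra_simps)
  have "HD j (\<lambda>v. 1 + (\<pi>O s \<omega> - 1) * \<beta> \<omega> s v) \<theta> (0 + (\<pi>O s \<omega> - 1) * partial j (\<beta> \<omega> s) \<theta>)"
    by (intro HD_add HD_const HD_cmult HD_diff) (use \<beta>_diff in blast)
  then have "HD j (\<lambda>v. 1 - \<beta> \<omega> s v + \<beta> \<omega> s v * \<pi>O s \<omega>) \<theta> ((\<pi>O s \<omega> - 1) * partial j (\<beta> \<omega> s) \<theta>)"
    unfolding e by simp
  then have "HD j (\<lambda>v. ln (1 - \<beta> \<omega> s v + \<beta> \<omega> s v * \<pi>O s \<omega>)) \<theta>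
     ((\<pi>O s \<omega> - 1) * partial j (\<beta> \<omega> s) \<theta> / (1 - \<beta> \<omega> s \<theta> + \<beta> \<omega> s \<theta> * \<pi>O s \<omega>))"
    by (rule HD_ln) (use log_finite in auto)
  then show ?thesis by (rule HD_partial)
qed

lemma main_limit:
  fixes \<mu>O :: "'s \<times> 'o \<Rightarrow> real"
  assumes irred: "irreducible_chain (pair_kernel P \<pi> \<beta> \<pi>O \<theta>)"
    and stat: "stationary_dist (pair_kernel P \<pi> \<beta> \<pi>O \<theta>) \<mu>O"
  shows "(\<lambda>T. fisher_fh d0 P \<pi> \<beta> \<pi>O T \<theta> i j / real T)
           \<longlonglongrightarrow>
         - (\<Sum>(s, \<omega>)\<in>UNIV. \<mu>O (s, \<omega>) *
              partial i (\<lambda>v. ln (\<beta> \<omega> s v)) \<theta> *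
              partial j (\<lambda>v. ln (1 - \<beta> \<omega> s v + \<beta> \<omega> s v * \<pi>O s \<omega>)) \<theta>)"
proof -
  note facts = P_stoch d0_dist \<pi>_stoch \<pi>O_stoch \<beta>_range log_finite \<beta>_diff \<beta>_diff2
  define K where "K = pair_kernel P \<pi> \<beta> \<pi>O \<theta>"
  define p0 where "p0 = init_pair d0 P \<pi> \<pi>O"
  define d where "d t x = (\<Sum>z\<in>UNIV. p0 z * kpow K t z x)" for t x
  have rs: "\<And>x. (\<Sum>y\<in>UNIV. K x y) = 1" unfolding K_def by (rule pk_rowsum[OF facts])
  have fis: "fisher_fh d0 P \<pi> \<beta> \<pi>O T \<theta> i j = (\<Sum>t<T. \<Sum>x\<in>UNIV. d t x * Phi x)" for T
  proof -
    have "fisher_fh d0 P \<pi> \<beta> \<pi>O T \<theta> i j = - (\<Sum>xs\<in>paths T. pw p0 K xs * pG (gg \<beta> \<pi>O \<theta> i j) xs)"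
      unfolding fisher_fh_def
    proof (intro arg_cong[where f = uminus] sum.cong[OF refl])
      fix xs :: "('s \<times> 'o) list" assume xs: "xs \<in> paths T"
      show "path_prob d0 P \<pi> \<beta> \<pi>O \<theta> xs * partial i (\<lambda>v. partial j (\<lambda>w. ln (path_prob d0 P \<pi> \<beta> \<pi>O w xs)) v) \<theta>
          = pw p0 K xs * pG (gg \<beta> \<pi>O \<theta> i j) xs"
      proof (cases "path_prob d0 P \<pi> \<beta> \<pi>O \<theta> xs = 0")
        case True
        then show ?thesis by (simp add: pw_eq K_def p0_def)
      next
        case False
        then show ?thesis using path_hess[OF facts xs False] by (simp add: pw_eq K_def p0_def)
      qed
    qed
    also have "\<dots> = - (\<Sum>t<T. \<Sum>x\<in>UNIV. d t x * (\<Sum>y\<in>UNIV. K x y * gg \<beta> \<pi>O \<theta> i j x y))"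
      unfolding d_def by (simp only: marg_G[OF rs])
    also have "\<dots> = (\<Sum>t<T. \<Sum>x\<in>UNIV. d t x * Phi x)"
      using step_expect by (simp add: K_def sum_negf[symmetric])
    finally show ?thesis .
  qed
  have fisT: "fisher_fh d0 P \<pi> \<beta> \<pi>O T \<theta> i j / real T = (\<Sum>x\<in>UNIV. ((\<Sum>t<T. d t x) / real T) * Phi x)" for T
    unfolding fis by (subst sum.swap) (simp add: sum_divide_distrib sum_distrib_right)
  have stoch: "stochastic_kernel K"
    unfolding stochastic_kernel_def K_def using pk_nn[OF facts] pk_rowsum[OF facts] by auto
  have p0d: "prob_dist p0"
    unfolding prob_dist_def p0_def using init_nn[OF facts] init_sum by auto
  have lim: "(\<lambda>T. fisher_fh d0 P \<pi> \<beta> \<pi>O T \<theta> i j / real T) \<longlonglongrightarrow> (\<Sum>x\<in>UNIV. \<mu>O x * Phi x)"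
    unfolding fisT
    by (intro tendsto_sum tendsto_mult_right)
       (use cesaro[OF stoch irred[folded K_def] stat[folded K_def] p0d] in \<open>simp add: d_def\<close>)
  have rhs: "- (\<Sum>(s, \<omega>)\<in>UNIV. \<mu>O (s, \<omega>) *
              partial i (\<lambda>v. ln (\<beta> \<omega> s v)) \<theta> *
              partial j (\<lambda>v. ln (1 - \<beta> \<omega> s v + \<beta> \<omega> s v * \<pi>O s \<omega>)) \<theta>) = (\<Sum>x\<in>UNIV. \<mu>O x * Phi x)"
  proof -
    have "(\<Sum>(s, \<omega>)\<in>UNIV. \<mu>O (s, \<omega>) *
              partial i (\<lambda>v. ln (\<beta> \<omega> s v)) \<theta> *
              partial j (\<lambda>v. ln (1 - \<beta> \<omega> s v + \<beta> \<omega> s v * \<pi>O s \<omega>)) \<theta>) = (\<Sum>x\<in>UNIV. - (\<mu>O x * Phi x))"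
    proof (rule sum.cong[OF refl])
      fix x :: "'s \<times> 'o"
      obtain s \<omega> where x: "x = (s, \<omega>)" by (cases x)
      have bpos: "0 < \<beta> \<omega> s \<theta>" using \<beta>_range by auto
      have cpos: "0 < 1 - \<beta> \<omega> s \<theta> + \<beta> \<omega> s \<theta> * \<pi>O s \<omega>" using log_finite by auto
      show "(case x of (s, \<omega>) \<Rightarrow> \<mu>O (s, \<omega>) *
              partial i (\<lambda>v. ln (\<beta> \<omega> s v)) \<theta> *
              partial j (\<lambda>v. ln (1 - \<beta> \<omega> s v + \<beta> \<omega> s v * \<pi>O s \<omega>)) \<theta>) = - (\<mu>O x * Phi x)"
        unfolding x prod.case partial_ln_beta partial_ln_c Phi_def fst_conv snd_conv using bpos cpos
        by (simp add: field_simps, simp add: minus_divide_left algebra_simps)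
    qed
    then show ?thesis by (simp add: sum_negf)
  qed
  show ?thesis using lim unfolding rhs .
qed

end

theorem theorem2:
  fixes P :: "'s::finite \<Rightarrow> 'a::finite \<Rightarrow> 's \<Rightarrow> real"
    and d0 :: "'s \<Rightarrow> real"
    and \<pi> :: "'o::finite \<Rightarrow> 's \<Rightarrow> 'a \<Rightarrow> real"
    and \<beta> :: "'o \<Rightarrow> 's \<Rightarrow> real^'n::finite \<Rightarrow> real"
    and \<pi>O :: "'s \<Rightarrow> 'o \<Rightarrow> real"
    and \<theta> :: "real^'n"
    and \<mu>O :: "'s \<times> 'o \<Rightarrow> real"
    and i j :: 'n
  assumes P_stoch: "\<forall>s. stochastic_kernel (P s)"
    and d0_dist: "prob_dist d0"
    and \<pi>_stoch: "\<forall>\<omega>. stochastic_kernel (\<pi> \<omega>)"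
    and \<pi>O_stoch: "stochastic_kernel \<pi>O"
    and \<beta>_range: "\<forall>\<omega> s v. 0 < \<beta> \<omega> s v \<and> \<beta> \<omega> s v \<le> 1"
    and log_finite: "\<forall>\<omega> s v. 0 < 1 - \<beta> \<omega> s v + \<beta> \<omega> s v * \<pi>O s \<omega>"
    and \<beta>_diff: "\<forall>\<omega> s v. \<beta> \<omega> s differentiable (at v)"
    and \<beta>_diff2: "\<forall>\<omega> s k v. partial k (\<beta> \<omega> s) differentiable (at v)"
    and irred: "irreducible_chain (pair_kernel P \<pi> \<beta> \<pi>O \<theta>)"
    and aperiodic: "aperiodic_chain (pair_kernel P \<pi> \<beta> \<pi>O \<theta>)"
    and stat: "stationary_dist (pair_kernel P \<pi> \<beta> \<pi>O \<theta>) \<mu>O"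
  shows "(\<lambda>T. fisher_fh d0 P \<pi> \<beta> \<pi>O T \<theta> i j / real T)
           \<longlonglongrightarrow>
         - (\<Sum>(s, \<omega>)\<in>UNIV. \<mu>O (s, \<omega>) *
              partial i (\<lambda>v. ln (\<beta> \<omega> s v)) \<theta> *
              partial j (\<lambda>v. ln (1 - \<beta> \<omega> s v + \<beta> \<omega> s v * \<pi>O s \<omega>)) \<theta>)"
  by (rule main_limit[OF P_stoch d0_dist \<pi>_stoch \<pi>O_stoch \<beta>_range log_finite \<beta>_diff \<beta>_diff2 irred stat])

end
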